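(* Let $L\subseteq\mathbb{R}^m$ be a lattice with covering radius $R$, and let $C\subseteq\mathbb{R}^m/L$ be finite. The following are equivalent: (i) $C$ is holy; (ii) for every $x,y\in C$ with $x\neq y$, $d(x,y)=R$; (iii) $\min\{d(x,y):x,y\in C,x\neq y\}=R$. Furthermore, (a) every holy code in $\mathbb{R}^m/L$ is optimal, and (b) if there exists a holy code of size $n$ in $\mathbb{R}^m/L$, then every optimal code of size $n$ in $\mathbb{R}^m/L$ is a holy code.
   Context: A lattice is a discrete full-rank subgroup of $\mathbb{R}^m$. The torus $\mathbb{R}^m/L$ has metric $d(x,y):=\min\{\|s-t\|_2:s\in x,t\in y\}$. An optimal code of size $n$ is an $n$-element subset of $\mathbb{R}^m/L$ maximizing the minimum distance between distinct points. The covering radius $R$ of $L$ is the supremum of $r$ such that $\mathbb{R}^m\setminus\bigcup_{x\in L}B(x,r)$ is nonempty; $z\in\mathbb{R}^m$ is a deep hole of $L$ if $\min\{\|z-x\|_2:x\in L\}=R$. A code $C=\{s+L:s\in S\}$ (with $S$ a set of representatives of distinct cosets) is holy if for all $s,t\in S$ with $s\neq t$, $s-t$ is a deep hole of $L$. *)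

theory Defs
  imports "HOL-Analysis.Analysis"
begin

definition is_lattice :: "'a::euclidean_space set \<Rightarrow> bool" where
  "is_lattice L \<longleftrightarrow>
     0 \<in> L \<and> (\<forall>x\<in>L. \<forall>y\<in>L. x + y \<in> L) \<and> (\<forall>x\<in>L. - x \<in> L) \<and>
     (\<exists>e>0. \<forall>x\<in>L. x \<noteq> 0 \<longrightarrow> e \<le> norm x) \<and>
     span L = UNIV"

text \<open>The coset s + L, i.e. the point of the torus represented by s.\<close>
definition coset :: "'a::euclidean_space set \<Rightarrow> 'a \<Rightarrow> 'a set" where
  "coset L s = (\<lambda>l. s + l) ` L"

definition torus :: "'a::euclidean_space set \<Rightarrow> 'a set set" where
  "torus L = range (coset L)"

definition tdist :: "'a::euclidean_space set \<Rightarrow> 'a set \<Rightarrow> real" where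
  "tdist x y = Inf {norm (s - t) | s t. s \<in> x \<and> t \<in> y}"

definition covering_radius :: "'a::euclidean_space set \<Rightarrow> real" where
  "covering_radius L = Sup {r. UNIV - (\<Union>x\<in>L. ball x r) \<noteq> {}}"

definition deep_hole :: "'a::euclidean_space set \<Rightarrow> 'a \<Rightarrow> bool" where
  "deep_hole L z \<longleftrightarrow> Inf {norm (z - x) | x. x \<in> L} = covering_radius L"

definition holy :: "'a::euclidean_space set \<Rightarrow> 'a set set \<Rightarrow> bool" where
  "holy L C \<longleftrightarrow> (\<exists>S. C = coset L ` S \<and> inj_on (coset L) S \<and>
      (\<forall>s\<in>S. \<forall>t\<in>S. s \<noteq> t \<longrightarrow> deep_hole L (s - t)))"

definition min_dist :: "'a::euclidean_space set set \<Rightarrow> real" where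
  "min_dist C = Inf {tdist x y | x y. x \<in> C \<and> y \<in> C \<and> x \<noteq> y}"

definition optimal_code :: "'a::euclidean_space set \<Rightarrow> nat \<Rightarrow> 'a set set \<Rightarrow> bool" where
  "optimal_code L n C \<longleftrightarrow> C \<subseteq> torus L \<and> finite C \<and> card C = n \<and>
     (\<forall>C'. C' \<subseteq> torus L \<and> finite C' \<and> card C' = n \<longrightarrow> min_dist C' \<le> min_dist C)"

end

theory Submission
  imports Defs
begin

lemma lat_zero: "is_lattice L \<Longrightarrow> 0 \<in> L" unfolding is_lattice_def by blast
lemma lat_add: "is_lattice L \<Longrightarrow> x \<in> L \<Longrightarrow> y \<in> L \<Longrightarrow> x + y \<in> L" unfolding is_lattice_def by blast
lemma lat_neg: "is_lattice L \<Longrightarrow> x \<in> L \<Longrightarrow> - x \<in> L" unfolding is_lattice_def by blast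

lemma lat_nat_mult:
  assumes "is_lattice L" "b \<in> L"
  shows "of_nat n *\<^sub>R b \<in> L"
proof (induction n)
  case 0 then show ?case using lat_zero[OF assms(1)] by simp
next
  case (Suc n)
  have "of_nat (Suc n) *\<^sub>R b = of_nat n *\<^sub>R b + b" by (simp add: algebra_simps)
  then show ?case using Suc lat_add[OF assms(1) _ assms(2)] by simp
qed

lemma lat_int_mult:
  assumes "is_lattice L" "b \<in> L"
  shows "of_int k *\<^sub>R b \<in> L"
proof (cases "k \<ge> 0")
  case True
  then have "of_int k *\<^sub>R b = of_nat (nat k) *\<^sub>R b" by simp
  then show ?thesis by (simp only:) (rule lat_nat_mult[OF assms])
next
  case False
  then have "of_int k *\<^sub>R b = - (of_nat (nat (-k)) *\<^sub>R b)" by simp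
  then show ?thesis by (simp only:) (rule lat_neg[OF assms(1) lat_nat_mult[OF assms]])
qed

lemma lat_sum:
  assumes "is_lattice L" "finite B" "\<And>b. b \<in> B \<Longrightarrow> f b \<in> L"
  shows "sum f B \<in> L"
  using assms(2,3)
proof (induction B rule: finite_induct)
  case empty then show ?case using lat_zero[OF assms(1)] by simp
next
  case (insert x F)
  then show ?case using lat_add[OF assms(1)] by simp
qed

lemma lat_cover:
  fixes L :: "'a::euclidean_space set"
  assumes "is_lattice L"
  shows "\<exists>Bd. \<forall>z. \<exists>x\<in>L. norm (z - x) \<le> Bd"
proof -
  obtain B where B: "B \<subseteq> L" "independent B" "L \<subseteq> span B"
    using maximal_independent_subset by blast
  have fin: "finite B" using B(2) finiteI_independent by blast
  have sp: "span B = UNIV"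
  proof -
    have "span L \<subseteq> span B" by (rule span_minimal[OF B(3) subspace_span])
    then show ?thesis using assms unfolding is_lattice_def by auto
  qed
  show ?thesis
  proof (intro exI allI)
    fix z :: 'a
    have "z \<in> span B" using sp by simp
    then obtain u where u: "z = (\<Sum>v\<in>B. u v *\<^sub>R v)"
      using span_finite[OF fin] by auto
    define x where "x = (\<Sum>v\<in>B. of_int (floor (u v)) *\<^sub>R v)"
    have xL: "x \<in> L" unfolding x_def
      using B(1) by (intro lat_sum[OF assms fin] lat_int_mult[OF assms]) auto
    have "z - x = (\<Sum>v\<in>B. (u v - of_int (floor (u v))) *\<^sub>R v)"
      unfolding u x_def by (simp add: sum_subtractf scaleR_diff_left)
    also have "norm \<dots> \<le> (\<Sum>v\<in>B. norm ((u v - of_int (floor (u v))) *\<^sub>R v))"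
      by (rule norm_sum)
    also have "\<dots> \<le> (\<Sum>v\<in>B. norm v)"
    proof (rule sum_mono)
      fix v assume "v \<in> B"
      have "\<bar>u v - of_int (floor (u v))\<bar> \<le> 1" by linarith
      then show "norm ((u v - of_int (floor (u v))) *\<^sub>R v) \<le> norm v"
        by (simp add: mult_left_le_one_le)
    qed
    finally show "\<exists>x\<in>L. norm (z - x) \<le> (\<Sum>v\<in>B. norm v)" using xL by blast
  qed
qed

definition dL :: "'a::euclidean_space set \<Rightarrow> 'a \<Rightarrow> real" where
  "dL L z = Inf {norm (z - x) | x. x \<in> L}"

lemma dL_le:
  fixes L :: "'a::euclidean_space set"
  assumes "is_lattice L"
  shows "dL L z \<le> covering_radius L"
proof -
  let ?A = "{r. UNIV - (\<Union>x\<in>L. ball x r) \<noteq> {}}"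
  obtain Bd where Bd: "\<forall>z. \<exists>x\<in>L. norm (z - x) \<le> Bd" using lat_cover[OF assms] by blast
  have bdd: "bdd_above ?A"
  proof (rule bdd_aboveI)
    fix r assume "r \<in> ?A"
    then obtain w where "w \<notin> (\<Union>x\<in>L. ball x r)" by blast
    then have w: "\<forall>x\<in>L. \<not> dist x w < r" by simp
    obtain x where "x \<in> L" "norm (w - x) \<le> Bd" using Bd by blast
    then show "r \<le> Bd" using w by (metis dist_commute dist_norm not_less order.trans)
  qed
  have mem: "dL L z \<in> ?A"
  proof -
    have "\<forall>x\<in>L. \<not> dist x z < dL L z"
    proof
      fix x assume "x \<in> L"
      have bb: "bdd_below {norm (z - x) | x. x \<in> L}" by (rule bdd_belowI[where m=0]) auto
      have "dL L z \<le> norm (z - x)" unfolding dL_def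
        by (rule cInf_lower[OF _ bb]) (use \<open>x \<in> L\<close> in auto)
      then show "\<not> dist x z < dL L z" by (simp add: dist_norm norm_minus_commute)
    qed
    then have "z \<notin> (\<Union>x\<in>L. ball x (dL L z))" by simp
    then show ?thesis by blast
  qed
  show ?thesis unfolding covering_radius_def using cSup_upper[OF mem bdd] .
qed

lemma tdist_coset:
  fixes L :: "'a::euclidean_space set"
  assumes "is_lattice L"
  shows "tdist (coset L s) (coset L t) = dL L (s - t)"
proof -
  have "{norm (a - b) | a b. a \<in> coset L s \<and> b \<in> coset L t} = {norm (s - t - x) | x. x \<in> L}"
  proof (intro equalityI subsetI)
    fix r assume "r \<in> {norm (a - b) | a b. a \<in> coset L s \<and> b \<in> coset L t}"
    then obtain l l' where l: "l \<in> L" "l' \<in> L" "r = norm ((s + l) - (t + l'))"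
      unfolding coset_def by auto
    have "l' + - l \<in> L" using l assms unfolding is_lattice_def by blast
    moreover have "r = norm (s - t - (l' + - l))" using l(3) by (simp add: algebra_simps)
    ultimately show "r \<in> {norm (s - t - x) | x. x \<in> L}" by blast
  next
    fix r assume "r \<in> {norm (s - t - x) | x. x \<in> L}"
    then obtain x where x: "x \<in> L" "r = norm (s - t - x)" by auto
    have "s + 0 \<in> coset L s" "t + x \<in> coset L t"
      using assms x unfolding coset_def is_lattice_def by auto
    moreover have "r = norm ((s + 0) - (t + x))" using x by (simp add: algebra_simps)
    ultimately show "r \<in> {norm (a - b) | a b. a \<in> coset L s \<and> b \<in> coset L t}" by blast
  qed
  then show ?thesis unfolding tdist_def dL_def by simp
qed

lemma tdist_le:
  fixes L :: "'a::euclidean_space set"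
  assumes "is_lattice L" "x \<in> torus L" "y \<in> torus L"
  shows "tdist x y \<le> covering_radius L"
  using assms tdist_coset[OF assms(1)] dL_le[OF assms(1)] unfolding torus_def by auto

lemma holy_iff:
  fixes L :: "'a::euclidean_space set"
  assumes "is_lattice L" "C \<subseteq> torus L"
  shows "holy L C \<longleftrightarrow> (\<forall>x\<in>C. \<forall>y\<in>C. x \<noteq> y \<longrightarrow> tdist x y = covering_radius L)"
proof
  assume "holy L C"
  then obtain S where S: "C = coset L ` S" "inj_on (coset L) S"
    "\<forall>s\<in>S. \<forall>t\<in>S. s \<noteq> t \<longrightarrow> deep_hole L (s - t)" unfolding holy_def by blast
  show "\<forall>x\<in>C. \<forall>y\<in>C. x \<noteq> y \<longrightarrow> tdist x y = covering_radius L"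
  proof (intro ballI impI)
    fix x y assume "x \<in> C" "y \<in> C" "x \<noteq> y"
    then obtain s t where "s \<in> S" "t \<in> S" "x = coset L s" "y = coset L t" "s \<noteq> t"
      using S(1) by auto
    then show "tdist x y = covering_radius L"
      using S(3) tdist_coset[OF assms(1)] unfolding deep_hole_def dL_def by auto
  qed
next
  assume H: "\<forall>x\<in>C. \<forall>y\<in>C. x \<noteq> y \<longrightarrow> tdist x y = covering_radius L"
  define rep where "rep x = (SOME s. x = coset L s)" for x
  have rep: "coset L (rep x) = x" if "x \<in> C" for x
  proof -
    have "\<exists>s. x = coset L s" using that assms(2) unfolding torus_def by auto
    then show ?thesis unfolding rep_def by (metis (mono_tags) someI_ex)
  qed
  define S where "S = rep ` C"
  have "C = coset L ` S" unfolding S_def using rep by (force simp: image_image)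
  moreover have "inj_on (coset L) S" unfolding S_def inj_on_def using rep by auto
  moreover have "\<forall>s\<in>S. \<forall>t\<in>S. s \<noteq> t \<longrightarrow> deep_hole L (s - t)"
  proof (intro ballI impI)
    fix s t assume "s \<in> S" "t \<in> S" "s \<noteq> t"
    then obtain x y where xy: "x \<in> C" "y \<in> C" "s = rep x" "t = rep y" unfolding S_def by auto
    then have "x \<noteq> y" using \<open>s \<noteq> t\<close> by auto
    then have "tdist (coset L s) (coset L t) = covering_radius L" using H xy rep by auto
    then show "deep_hole L (s - t)"
      using tdist_coset[OF assms(1)] unfolding deep_hole_def dL_def by auto
  qed
  ultimately show "holy L C" unfolding holy_def by blast
qed

lemma two_elems:
  assumes "finite C" "card C \<ge> 2"
  shows "\<exists>x\<in>C. \<exists>y\<in>C. x \<noteq> y"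
proof (rule ccontr)
  assume "\<not> ?thesis"
  then have "\<forall>x\<in>C. \<forall>y\<in>C. x = y" by blast
  then have "card C \<le> Suc 0" by (subst card_le_Suc0_iff_eq[OF assms(1)])
  then show False using assms by simp
qed

lemma no_two:
  assumes "finite C" "card C \<le> 1" "x \<in> C" "y \<in> C"
  shows "x = y"
proof -
  have "card C \<le> Suc 0" using assms(2) by simp
  then have "\<forall>x\<in>C. \<forall>y\<in>C. x = y" by (subst (asm) card_le_Suc0_iff_eq[OF assms(1)])
  then show ?thesis using assms(3,4) by simp
qed

lemma md_finite:
  assumes "finite C"
  shows "finite {tdist x y | x y. x \<in> C \<and> y \<in> C \<and> x \<noteq> y}"
proof -
  have "{tdist x y | x y. x \<in> C \<and> y \<in> C \<and> x \<noteq> y} \<subseteq> (\<lambda>(x,y). tdist x y) ` (C \<times> C)" by auto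
  then show ?thesis by (rule finite_subset) (use assms in simp)
qed

lemma md_le:
  fixes L :: "'a::euclidean_space set"
  assumes "is_lattice L" "C \<subseteq> torus L" "finite C" "card C \<ge> 2"
  shows "min_dist C \<le> covering_radius L"
proof -
  obtain x y where "x \<in> C" "y \<in> C" "x \<noteq> y" using two_elems[OF assms(3,4)] by blast
  then have "min_dist C \<le> tdist x y" unfolding min_dist_def
    by (intro cInf_lower) (use bdd_below_finite[OF md_finite[OF assms(3)]] in auto)
  also have "\<dots> \<le> covering_radius L" using tdist_le[OF assms(1)] assms(2) \<open>x \<in> C\<close> \<open>y \<in> C\<close> by auto
  finally show ?thesis .
qed

lemma all_iff_md:
  fixes L :: "'a::euclidean_space set"
  assumes "is_lattice L" "C \<subseteq> torus L" "finite C" "card C \<ge> 2"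
  shows "(\<forall>x\<in>C. \<forall>y\<in>C. x \<noteq> y \<longrightarrow> tdist x y = covering_radius L) \<longleftrightarrow>
         min_dist C = covering_radius L"
proof
  assume H: "\<forall>x\<in>C. \<forall>y\<in>C. x \<noteq> y \<longrightarrow> tdist x y = covering_radius L"
  obtain x y where "x \<in> C" "y \<in> C" "x \<noteq> y" using two_elems[OF assms(3,4)] by blast
  note xy = this
  have "{tdist x y | x y. x \<in> C \<and> y \<in> C \<and> x \<noteq> y} = {covering_radius L}"
  proof (intro equalityI subsetI)
    fix r assume "r \<in> {tdist x y | x y. x \<in> C \<and> y \<in> C \<and> x \<noteq> y}"
    then show "r \<in> {covering_radius L}" using H by auto
  next
    fix r assume "r \<in> {covering_radius L}"
    then have "r = tdist x y" using H xy by auto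
    then show "r \<in> {tdist x y | x y. x \<in> C \<and> y \<in> C \<and> x \<noteq> y}" using xy by blast
  qed
  then show "min_dist C = covering_radius L" unfolding min_dist_def by simp
next
  assume H: "min_dist C = covering_radius L"
  show "\<forall>x\<in>C. \<forall>y\<in>C. x \<noteq> y \<longrightarrow> tdist x y = covering_radius L"
  proof (intro ballI impI)
    fix x y assume xy: "x \<in> C" "y \<in> C" "x \<noteq> y"
    then have "min_dist C \<le> tdist x y" unfolding min_dist_def
      by (intro cInf_lower) (use bdd_below_finite[OF md_finite[OF assms(3)]] in auto)
    moreover have "tdist x y \<le> covering_radius L" using tdist_le[OF assms(1)] assms(2) xy by auto
    ultimately show "tdist x y = covering_radius L" using H by linarith
  qed
qed

lemma md_small:
  assumes "finite C" "card C \<le> 1"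
  shows "min_dist C = Inf {}"
proof -
  have eq: "{tdist x y | x y. x \<in> C \<and> y \<in> C \<and> x \<noteq> y} = {}" using no_two[OF assms] by blast
  show ?thesis unfolding min_dist_def eq ..
qed

lemma holy_small:
  fixes L :: "'a::euclidean_space set"
  assumes "is_lattice L" "C \<subseteq> torus L" "finite C" "card C \<le> 1"
  shows "holy L C"
proof -
  have "\<forall>x\<in>C. \<forall>y\<in>C. x \<noteq> y \<longrightarrow> tdist x y = covering_radius L"
    using no_two[OF assms(3,4)] by blast
  then show ?thesis using holy_iff[OF assms(1,2)] by simp
qed

theorem lemma4p9:
  fixes L :: "'a::euclidean_space set"
  assumes "is_lattice L"
  shows "(\<forall>C. C \<subseteq> torus L \<and> finite C \<longrightarrow>
            (holy L C \<longleftrightarrow> (\<forall>x\<in>C. \<forall>y\<in>C. x \<noteq> y \<longrightarrow> tdist x y = covering_radius L)) \<and>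
            (card C \<ge> 2 \<longrightarrow>
               ((\<forall>x\<in>C. \<forall>y\<in>C. x \<noteq> y \<longrightarrow> tdist x y = covering_radius L) \<longleftrightarrow>
                min_dist C = covering_radius L)))
       \<and> (\<forall>C. C \<subseteq> torus L \<and> finite C \<and> holy L C \<longrightarrow> optimal_code L (card C) C)
       \<and> (\<forall>n. (\<exists>C. C \<subseteq> torus L \<and> finite C \<and> card C = n \<and> holy L C) \<longrightarrow>
              (\<forall>C. optimal_code L n C \<longrightarrow> holy L C))"
proof (intro conjI allI impI)
  fix C :: "'a set set" assume C: "C \<subseteq> torus L \<and> finite C"
  show "holy L C \<longleftrightarrow> (\<forall>x\<in>C. \<forall>y\<in>C. x \<noteq> y \<longrightarrow> tdist x y = covering_radius L)"
    by (rule holy_iff[OF assms conjunct1[OF C]])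
next
  fix C :: "'a set set" assume C: "C \<subseteq> torus L \<and> finite C" and c2: "card C \<ge> 2"
  show "(\<forall>x\<in>C. \<forall>y\<in>C. x \<noteq> y \<longrightarrow> tdist x y = covering_radius L) \<longleftrightarrow>
                min_dist C = covering_radius L"
    by (rule all_iff_md[OF assms conjunct1[OF C] conjunct2[OF C] c2])
next
  fix C :: "'a set set" assume C: "C \<subseteq> torus L \<and> finite C \<and> holy L C"
  have Ct: "C \<subseteq> torus L" and Cf: "finite C" and Ch: "holy L C" using C by auto
  show "optimal_code L (card C) C"
    unfolding optimal_code_def
  proof (intro conjI allI impI)
    fix C' :: "'a set set" assume C': "C' \<subseteq> torus L \<and> finite C' \<and> card C' = card C"
    have C't: "C' \<subseteq> torus L" and C'f: "finite C'" and C'c: "card C' = card C" using C' by auto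
    show "min_dist C' \<le> min_dist C"
    proof (cases "card C \<ge> 2")
      case True
      have "\<forall>x\<in>C. \<forall>y\<in>C. x \<noteq> y \<longrightarrow> tdist x y = covering_radius L"
        using holy_iff[OF assms Ct] Ch by simp
      then have "min_dist C = covering_radius L"
        using all_iff_md[OF assms Ct Cf True] by simp
      moreover have "min_dist C' \<le> covering_radius L"
        by (rule md_le[OF assms C't C'f]) (use True C'c in simp)
      ultimately show ?thesis by simp
    next
      case False
      then have "card C \<le> 1" by simp
      then have "min_dist C = Inf {}" "min_dist C' = Inf {}"
        using md_small[OF Cf] md_small[OF C'f] C'c by auto
      then show ?thesis by simp
    qed
  qed (use Ct Cf in auto)
next
  fix n and C :: "'a set set"
  assume ex: "\<exists>C. C \<subseteq> torus L \<and> finite C \<and> card C = n \<and> holy L C"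
    and opt: "optimal_code L n C"
  obtain H where H: "H \<subseteq> torus L" "finite H" "card H = n" "holy L H" using ex by blast
  have C: "C \<subseteq> torus L" "finite C" "card C = n"
    using opt unfolding optimal_code_def by auto
  have le: "min_dist H \<le> min_dist C"
    using opt H unfolding optimal_code_def by blast
  show "holy L C"
  proof (cases "n \<ge> 2")
    case True
    have "\<forall>x\<in>H. \<forall>y\<in>H. x \<noteq> y \<longrightarrow> tdist x y = covering_radius L"
      using holy_iff[OF assms H(1)] H(4) by simp
    then have "min_dist H = covering_radius L"
      using all_iff_md[OF assms H(1,2)] H(3) True by simp
    moreover have "min_dist C \<le> covering_radius L"
      by (rule md_le[OF assms C(1,2)]) (use True C(3) in simp)
    ultimately have "min_dist C = covering_radius L" using le by simp
    then have "\<forall>x\<in>C. \<forall>y\<in>C. x \<noteq> y \<longrightarrow> tdist x y = covering_radius L"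
      using all_iff_md[OF assms C(1,2)] C(3) True by simp
    then show ?thesis using holy_iff[OF assms C(1)] by simp
  next
    case False
    then show ?thesis using holy_small[OF assms C(1,2)] C(3) by simp
  qed
qed

end
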